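(* Let $X$ be a topological space which is not a Baire space. Then there exist a nonempty open set $U\subseteq X$ and a fragmentable function $f\colon X\to\mathbb R$ such that $f$ has no point of continuity in $U$ and $f(X)\subseteq\{1/n:n\in\mathbb N\}$. Moreover, if $X$ is perfectly normal, then $f$ can be chosen to have, in addition, the Lebesgue property.
   Context: A topological space is Baire if every nonempty open subset of it is nonmeager in it. $f\colon X\to\mathbb R$ is fragmentable if for every $\varepsilon>0$ and every nonempty closed $F\subseteq X$ there is an open $U$ with $U\cap F\neq\emptyset$ and $\operatorname{diam} f(U\cap F)<\varepsilon$; it has the Lebesgue property if for every $\varepsilon>0$ there are closed sets $X_n$ ($n\in\mathbb N$) with $X=\bigcup_n X_n$ and $\operatorname{diam} f(X_n)\le\varepsilon$ for all $n$. *)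

theory Defs
  imports "HOL-Analysis.Analysis"
begin

definition nowhere_dense_in :: "'a topology \<Rightarrow> 'a set \<Rightarrow> bool" where
  "nowhere_dense_in X S \<longleftrightarrow> S \<subseteq> topspace X \<and> X interior_of (X closure_of S) = {}"

definition meager_in :: "'a topology \<Rightarrow> 'a set \<Rightarrow> bool" where
  "meager_in X S \<longleftrightarrow> (\<exists>\<F>. countable \<F> \<and> (\<forall>N\<in>\<F>. nowhere_dense_in X N) \<and> S = \<Union>\<F>)"

definition baire_space :: "'a topology \<Rightarrow> bool" where
  "baire_space X \<longleftrightarrow>
     (\<forall>U. openin X U \<and> U \<noteq> {} \<longrightarrow> \<not> meager_in (subtopology X U) U)"

text \<open>diam A < e, resp. diam A \<le> e, for a set of reals (diam of an unbounded set is infinite).\<close>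
definition diam_less :: "real set \<Rightarrow> real \<Rightarrow> bool" where
  "diam_less A e \<longleftrightarrow> bounded A \<and> diameter A < e"

definition diam_le :: "real set \<Rightarrow> real \<Rightarrow> bool" where
  "diam_le A e \<longleftrightarrow> bounded A \<and> diameter A \<le> e"

definition fragmentable :: "'a topology \<Rightarrow> ('a \<Rightarrow> real) \<Rightarrow> bool" where
  "fragmentable X f \<longleftrightarrow>
     (\<forall>e>0. \<forall>F. closedin X F \<and> F \<noteq> {} \<longrightarrow>
        (\<exists>U. openin X U \<and> U \<inter> F \<noteq> {} \<and> diam_less (f ` (U \<inter> F)) e))"

definition lebesgue_property :: "'a topology \<Rightarrow> ('a \<Rightarrow> real) \<Rightarrow> bool" where
  "lebesgue_property X f \<longleftrightarrow>
     (\<forall>e>0. \<exists>C :: nat \<Rightarrow> 'a set. (\<forall>n. closedin X (C n)) \<and> topspace X = (\<Union>n. C n)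
        \<and> (\<forall>n. diam_le (f ` C n) e))"

definition continuous_at_point :: "'a topology \<Rightarrow> ('a \<Rightarrow> real) \<Rightarrow> 'a \<Rightarrow> bool" where
  "continuous_at_point X f x \<longleftrightarrow> x \<in> topspace X \<and>
     (\<forall>V. open V \<and> f x \<in> V \<longrightarrow> (\<exists>W. openin X W \<and> x \<in> W \<and> f ` W \<subseteq> V))"

definition perfectly_normal :: "'a topology \<Rightarrow> bool" where
  "perfectly_normal X \<longleftrightarrow> normal_space X \<and> (\<forall>C. closedin X C \<longrightarrow> gdelta_in X C)"

end

theory Submission
  imports Defs
begin

lemma sing_diam_less: "A \<subseteq> {c::real} \<Longrightarrow> e > 0 \<Longrightarrow> diam_less A e"
proof -
  assume a: "A \<subseteq> {c}" "e > 0"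
  have b: "bounded A" using a(1) by (rule bounded_subset[rotated]) simp
  have "diameter A \<le> diameter {c}" using a(1) by (rule diameter_subset) simp
  then show ?thesis using a b by (simp add: diam_less_def)
qed

lemma sing_diam_le: "A \<subseteq> {c::real} \<Longrightarrow> e > 0 \<Longrightarrow> diam_le A e"
  using sing_diam_less[of A c e] by (simp add: diam_less_def diam_le_def)
lemma nd_sub:
  assumes U: "openin X U" and NU: "N \<subseteq> U"
    and nd: "(subtopology X U) interior_of ((subtopology X U) closure_of N) = {}"
  shows "X interior_of (X closure_of N) = {}"
proof (rule ccontr)
  let ?W = "X interior_of (X closure_of N)"
  assume "?W \<noteq> {}"
  then obtain x where x: "x \<in> ?W" by auto
  have Wo: "openin X ?W" by (rule openin_interior_of)
  have Wsub: "?W \<subseteq> X closure_of N" by (rule interior_of_subset)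
  have "x \<in> X closure_of N" using x Wsub by (rule subsetD[rotated])
  then have "\<forall>T. x \<in> T \<and> openin X T \<longrightarrow> (\<exists>y. y \<in> N \<and> y \<in> T)" unfolding in_closure_of by (rule conjunct2)
  then obtain y where y: "y \<in> N" "y \<in> ?W" using x Wo by meson
  have o1: "openin X (?W \<inter> U)" using Wo U by (rule openin_Int)
  have o2: "openin (subtopology X U) (?W \<inter> U)"
    using openin_open_subtopology[OF U, of "?W \<inter> U"] o1 by simp
  have "?W \<inter> U \<subseteq> U \<inter> X closure_of N" using Wsub by blast
  then have "?W \<inter> U \<subseteq> (subtopology X U) closure_of N"
    using closure_of_subtopology_open[of X U N] U by simp
  then have "?W \<inter> U \<subseteq> (subtopology X U) interior_of ((subtopology X U) closure_of N)"
    using o2 by (rule interior_of_maximal)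
  moreover have "y \<in> ?W \<inter> U" using y NU by blast
  ultimately show False using nd by blast
qed
lemma reduce:
  fixes X :: "'a topology"
  assumes "\<not> baire_space X"
  shows "\<exists>U (K :: nat \<Rightarrow> 'a set). openin X U \<and> U \<noteq> {} \<and> (\<forall>n. closedin X (K n)) \<and> (\<forall>n. X interior_of K n = {})
     \<and> (\<forall>m n. m \<le> n \<longrightarrow> K m \<subseteq> K n) \<and> K 0 = {} \<and> U \<subseteq> (\<Union>n. K n)"
proof -
  obtain U where U: "openin X U" "U \<noteq> {}" "meager_in (subtopology X U) U"
    using assms unfolding baire_space_def by blast
  then obtain \<F> where F: "countable \<F>" "\<forall>N\<in>\<F>. nowhere_dense_in (subtopology X U) N" "U = \<Union>\<F>"
    unfolding meager_in_def by blast
  have Fne: "\<F> \<noteq> {}" using F U by auto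
  define N where "N k = from_nat_into \<F> k" for k
  have NF: "N k \<in> \<F>" for k using Fne by (simp add: N_def from_nat_into)
  have rN: "range N = \<F>" using Fne F by (simp add: N_def)
  have NU: "N k \<subseteq> U" for k using NF F by auto
  have Ntop: "N k \<subseteq> topspace X" for k using NU U openin_subset by blast
  have Nnd: "X interior_of (X closure_of N k) = {}" for k
  proof -
    have "nowhere_dense_in (subtopology X U) (N k)" using NF F by auto
    then have "(subtopology X U) interior_of ((subtopology X U) closure_of (N k)) = {}"
      unfolding nowhere_dense_in_def by (rule conjunct2)
    then show ?thesis by (rule nd_sub[OF U(1) NU])
  qed
  define K where "K n = (\<Union>k<n. X closure_of N k)" for n
  have Kc: "closedin X (K n)" for n unfolding K_def by (intro closedin_Union) auto
  have KS: "K (Suc n) = X closure_of N n \<union> K n" for n unfolding K_def by (simp add: lessThan_Suc)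
  have Ki: "X interior_of K n = {}" for n
  proof (induction n)
    case 0 then show ?case by (simp add: K_def)
  next
    case (Suc n) then show ?case using KS interior_of_union_eq_empty[of X "X closure_of N n" "K n"] Nnd
      by simp
  qed
  have Km: "m \<le> n \<longrightarrow> K m \<subseteq> K n" for m n unfolding K_def by (rule impI, rule UN_mono) auto
  have Kcov: "U \<subseteq> (\<Union>n. K n)"
  proof
    fix x assume "x \<in> U"
    then obtain k where "x \<in> N k" using F rN by auto
    then have "x \<in> X closure_of N k" using closure_of_subset[OF Ntop] by blast
    then show "x \<in> (\<Union>n. K n)" unfolding K_def by blast
  qed
  have K0: "K 0 = {}" unfolding K_def by simp
  have C: "openin X U \<and> U \<noteq> {} \<and> (\<forall>n. closedin X (K n)) \<and> (\<forall>n. X interior_of K n = {})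
     \<and> (\<forall>m n. m \<le> n \<longrightarrow> K m \<subseteq> K n) \<and> K 0 = {} \<and> U \<subseteq> (\<Union>n. K n)"
    using U Kc Ki Km Kcov K0 by simp
  show ?thesis by (rule exI[of _ U], rule exI[of _ K], rule C)
qed

lemma main:
  fixes K :: "nat \<Rightarrow> 'a set"
  assumes U: "openin X U" "U \<noteq> {}" and Kc: "\<forall>n. closedin X (K n)"
    and Ki: "\<forall>n. X interior_of K n = {}"
    and Km: "\<forall>m n. m \<le> n \<longrightarrow> K m \<subseteq> K n" and K0: "K 0 = {}"
    and cov: "U \<subseteq> (\<Union>n. K n)"
  shows "\<exists>U (f :: 'a \<Rightarrow> real).
           openin X U \<and> U \<noteq> {} \<and> fragmentable X f
           \<and> (\<forall>x\<in>U. \<not> continuous_at_point X f x)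
           \<and> f ` topspace X \<subseteq> {1 / real n | n. n \<ge> 1}
           \<and> (perfectly_normal X \<longrightarrow> lebesgue_property X f)"
proof -
  define lev :: "'a \<Rightarrow> nat" where "lev x = (LEAST n. x \<in> K n)" for x
  define f where "f x = (if x \<in> U then 1 / real (lev x) else 1)" for x
  have levF: "x \<in> K (lev x)" if xU0: "x \<in> U" for x
  proof -
    obtain n where "x \<in> K n" using xU0 cov by blast
    then show ?thesis unfolding lev_def by (rule LeastI)
  qed
  have levmin: "lev x \<le> n" if "x \<in> K n" for x n
    using that unfolding lev_def by (rule Least_le)
  have lev1: "lev x \<ge> 1" if "x \<in> U" for x
    using levF[OF that] K0 by (cases "lev x") auto
  have L2: "f x \<le> 1 / (real n + 1)" if "x \<in> U" "x \<notin> K n" for x n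
  proof -
    have "\<not> lev x \<le> n" using Km levF[OF that(1)] that(2) by blast
    then have "real n + 1 \<le> real (lev x)" by simp
    then show ?thesis using that(1) unfolding f_def by (simp add: frac_le)
  qed
  have L3: "f x = 1 / real (Suc n)" if "x \<in> U" "x \<in> K (Suc n)" "x \<notin> K n" for x n
  proof -
    have "\<not> lev x \<le> n" using Km levF[OF that(1)] that(3) by blast
    moreover have "lev x \<le> Suc n" using levmin that(2) by blast
    ultimately have "lev x = Suc n" by simp
    then show ?thesis using that(1) unfolding f_def by simp
  qed
  have fpos: "f x > 0" for x using lev1 unfolding f_def by fastforce
  have frange: "f ` topspace X \<subseteq> {1 / real n | n. n \<ge> 1}"
  proof
    fix y assume "y \<in> f ` topspace X"
    then obtain x where y: "y = f x" by blast
    show "y \<in> {1 / real n | n. n \<ge> 1}"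
    proof (cases "x \<in> U")
      case True then show ?thesis using y lev1[OF True] unfolding f_def by auto
    next
      case False then have "y = 1 / real (1::nat)" using y unfolding f_def by simp
      then show ?thesis by blast
    qed
  qed
  have nocont: "\<not> continuous_at_point X f x" if xU: "x \<in> U" for x
  proof
    assume c: "continuous_at_point X f x"
    let ?V = "{1 / (real (lev x) + 1)<..}"
    have "f x = 1 / real (lev x)" using xU unfolding f_def by simp
    moreover have "1 / (real (lev x) + 1) < 1 / real (lev x)" using lev1[OF xU] by (simp add: frac_less2)
    ultimately have "f x \<in> ?V" by simp
    then obtain W where W: "openin X W" "x \<in> W" "f ` W \<subseteq> ?V"
      using c unfolding continuous_at_point_def by (meson open_greaterThan)
    have o: "openin X (W \<inter> U)" using W U by blast
    have "\<not> (W \<inter> U \<subseteq> K (lev x))"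
    proof
      assume "W \<inter> U \<subseteq> K (lev x)"
      then have "W \<inter> U \<subseteq> X interior_of K (lev x)" using o by (rule interior_of_maximal)
      then show False using Ki W xU by auto
    qed
    then obtain y where y: "y \<in> W" "y \<in> U" "y \<notin> K (lev x)" by blast
    have "f y \<le> 1 / (real (lev x) + 1)" using L2 y by blast
    moreover have "f y \<in> ?V" using W y by blast
    ultimately show False by simp
  qed
  have frag: "fragmentable X f"
    unfolding fragmentable_def
  proof (intro allI impI)
    fix e :: real and C assume e: "e > 0" and C: "closedin X C \<and> C \<noteq> {}"
    show "\<exists>V. openin X V \<and> V \<inter> C \<noteq> {} \<and> diam_less (f ` (V \<inter> C)) e"
    proof (cases "C \<inter> U = {}")
      case True
      have "f ` (topspace X \<inter> C) \<subseteq> {1}" using True unfolding f_def by auto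
      moreover have "topspace X \<inter> C \<noteq> {}" using C closedin_subset by blast
      ultimately show ?thesis using e sing_diam_less by blast
    next
      case False
      have ind: "(\<exists>V. openin X V \<and> V \<inter> C \<noteq> {} \<and> (\<exists>c. f ` (V \<inter> C) \<subseteq> {c}))
                 \<or> C \<inter> (U - K m) \<noteq> {}" for m
      proof (induction m)
        case 0 then show ?case using False K0 by simp
      next
        case (Suc m)
        show ?case
        proof (cases "(\<exists>V. openin X V \<and> V \<inter> C \<noteq> {} \<and> (\<exists>c. f ` (V \<inter> C) \<subseteq> {c}))
                 \<or> C \<inter> (U - K (Suc m)) \<noteq> {}")
          case True then show ?thesis .
        next
          case F2: False
          then have ne: "C \<inter> (U - K m) \<noteq> {}" using Suc by blast
          have "openin X (U - K m)" using U Kc by blast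
          moreover have "f ` ((U - K m) \<inter> C) \<subseteq> {1 / real (Suc m)}"
          proof
            fix z assume "z \<in> f ` ((U - K m) \<inter> C)"
            then obtain y where y: "y \<in> U" "y \<notin> K m" "y \<in> C" "z = f y" by blast
            then have "y \<in> K (Suc m)" using F2 by blast
            then show "z \<in> {1 / real (Suc m)}" using L3 y by blast
          qed
          ultimately show ?thesis using ne by blast
        qed
      qed
      obtain N where N: "inverse (real (Suc N)) < e" using reals_Archimedean e by blast
      show ?thesis
      proof (cases "\<exists>V. openin X V \<and> V \<inter> C \<noteq> {} \<and> (\<exists>c. f ` (V \<inter> C) \<subseteq> {c})")
        case True then show ?thesis using sing_diam_less e by blast
      next
        case F3: False
        then have ne: "(U - K N) \<inter> C \<noteq> {}" using ind[of N] by blast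
        have op: "openin X (U - K N)" using U Kc by blast
        have sub: "f ` ((U - K N) \<inter> C) \<subseteq> {0 .. 1 / (real N + 1)}"
          using L2 fpos by (auto simp: less_imp_le)
        have "diameter (f ` ((U - K N) \<inter> C)) \<le> diameter {0 .. 1 / (real N + 1)}"
          using sub by (intro diameter_subset) auto
        also have "\<dots> = 1 / (real N + 1)" by simp
        also have "\<dots> < e" using N by (simp add: inverse_eq_divide add.commute)
        finally have "diam_less (f ` ((U - K N) \<inter> C)) e"
          unfolding diam_less_def using sub bounded_subset[OF bounded_closed_interval sub] by simp
        then show ?thesis using op ne by blast
      qed
    qed
  qed
  have leb: "lebesgue_property X f" if pn: "perfectly_normal X"
  proof -
    have ofs: "fsigma_in X Q" if "openin X Q" for Q
    proof -
      have "closedin X (topspace X - Q)" using closedin_topspace that by (rule closedin_diff)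
      then have "gdelta_in X (topspace X - Q)" using pn unfolding perfectly_normal_def by blast
      then have "fsigma_in X (topspace X - (topspace X - Q))" by (rule gdelta_in_fsigma_in[THEN iffD1, THEN conjunct2])
      moreover have "topspace X - (topspace X - Q) = Q" using openin_subset[OF that] by blast
      ultimately show ?thesis by simp
    qed
    define S where "S m = U \<inter> K (Suc m) \<inter> (topspace X - K m)" for m
    have Sfs: "fsigma_in X (S m)" for m
      unfolding S_def
      by (rule fsigma_in_Int[OF fsigma_in_Int[OF ofs[OF U(1)] closed_imp_fsigma_in[OF Kc[rule_format]]]
           ofs[OF openin_diff[OF openin_topspace Kc[rule_format]]]])
    have "\<forall>m. \<exists>\<U>. countable \<U> \<and> (\<forall>D\<in>\<U>. closedin X D) \<and> \<Union>\<U> = S m"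
    proof
      fix m
      have "(countable union_of closedin X) (S m)" using Sfs[of m] unfolding fsigma_in_def .
      then have "\<exists>\<U>. countable \<U> \<and> \<U> \<subseteq> Collect (closedin X) \<and> \<Union>\<U> = S m"
        unfolding union_of_def .
      then obtain \<U> where u: "countable \<U> \<and> \<U> \<subseteq> Collect (closedin X) \<and> \<Union>\<U> = S m"
        by (elim exE)
      have "countable \<U> \<and> (\<forall>D\<in>\<U>. closedin X D) \<and> \<Union>\<U> = S m"
        using u by (simp add: subset_iff)
      then show "\<exists>\<U>. countable \<U> \<and> (\<forall>D\<in>\<U>. closedin X D) \<and> \<Union>\<U> = S m"
        by (rule exI)
    qed
    from choice[OF this] obtain Cs where Cs0:
      "\<forall>m. countable (Cs m) \<and> (\<forall>D\<in>Cs m. closedin X D) \<and> \<Union>(Cs m) = S m" ..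
    have Cs1: "countable (Cs m)" for m using Cs0 by simp
    have Cs2: "closedin X D" if Dc: "D \<in> Cs m" for m D using Cs0 Dc by blast
    have Cs3: "\<Union>(Cs m) = S m" for m using Cs0 by simp
    note Cs = Cs1 Cs2 Cs3
    define \<C> where "\<C> = insert (topspace X - U) (\<Union>m. Cs m)"
    have Cc: "countable \<C>" unfolding \<C>_def
      by (intro countable_insert countable_UN) (auto simp: Cs(1))
    have Cne: "\<C> \<noteq> {}" unfolding \<C>_def by auto
    have Ccl: "closedin X D" if Dm: "D \<in> \<C>" for D
    proof -
      have "D = topspace X - U \<or> (\<exists>m. D \<in> Cs m)" using Dm unfolding \<C>_def by blast
      then show ?thesis
      proof
        assume "D = topspace X - U"
        then show ?thesis using U(1) by (simp add: closedin_diff)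
      next
        assume "\<exists>m. D \<in> Cs m"
        then show ?thesis using Cs(2) by blast
      qed
    qed
    have Cconst: "\<exists>c. f ` D \<subseteq> {c}" if Dm2: "D \<in> \<C>" for D
    proof (cases "D = topspace X - U")
      case True then have "f ` D \<subseteq> {1}" unfolding f_def by auto
      then show ?thesis by blast
    next
      case False
      then obtain m where m: "D \<in> Cs m" using Dm2 unfolding \<C>_def by blast
      then have "D \<subseteq> S m" using Cs(3) by blast
      then have "f ` D \<subseteq> {1 / real (Suc m)}"
      proof -
        assume DS: "D \<subseteq> S m"
        show ?thesis
        proof
          fix z assume "z \<in> f ` D"
          then obtain y where y: "y \<in> D" "z = f y" by blast
          then have "y \<in> U" "y \<in> K (Suc m)" "y \<notin> K m" using DS unfolding S_def by auto
          then show "z \<in> {1 / real (Suc m)}" using L3 y(2) by simp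
        qed
      qed
      then show ?thesis by blast
    qed
    have Ccov: "topspace X = \<Union>\<C>"
    proof
      show "\<Union>\<C> \<subseteq> topspace X" using Ccl closedin_subset by blast
    next
      show "topspace X \<subseteq> \<Union>\<C>"
      proof
        fix x assume x: "x \<in> topspace X"
        show "x \<in> \<Union>\<C>"
        proof (cases "x \<in> U")
          case False then have "x \<in> topspace X - U" using x by blast
          moreover have "topspace X - U \<in> \<C>" unfolding \<C>_def by blast
          ultimately show ?thesis by blast
        next
          case True
          define m where "m = lev x - 1"
          have sm: "lev x = Suc m" using lev1[OF True] unfolding m_def by simp
          have "x \<in> K (Suc m)" using levF[OF True] sm by simp
          moreover have "x \<notin> K m" using levmin[of x m] sm by auto
          ultimately have "x \<in> S m" using True x unfolding S_def by blast
          then obtain D where "D \<in> Cs m" "x \<in> D" using Cs(3)[of m] by blast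
          moreover have "Cs m \<subseteq> \<C>" unfolding \<C>_def by blast
          ultimately show ?thesis by blast
        qed
      qed
    qed
    show ?thesis
      unfolding lebesgue_property_def
    proof (intro allI impI)
      fix e :: real assume e: "e > 0"
      define Cn where "Cn n = from_nat_into \<C> n" for n
      have mem: "Cn n \<in> \<C>" for n unfolding Cn_def using Cne by (rule from_nat_into)
      have a1: "\<forall>n. closedin X (Cn n)" using mem Ccl by blast
      have a2: "topspace X = (\<Union>n. Cn n)" unfolding Cn_def using Ccov Cne Cc by simp
      have a3: "\<forall>n. diam_le (f ` Cn n) e"
      proof
        fix n
        obtain c where "f ` Cn n \<subseteq> {c}" using Cconst[OF mem[of n]] by blast
        then show "diam_le (f ` Cn n) e" using e by (rule sing_diam_le)
      qed
      show "\<exists>C :: nat \<Rightarrow> 'a set. (\<forall>n. closedin X (C n)) \<and> topspace X = (\<Union>n. C n)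
        \<and> (\<forall>n. diam_le (f ` C n) e)"
        using a1 a2 a3 by blast
    qed
  qed
  show ?thesis using U frag nocont frange leb by blast
qed

theorem lemma2p7:
  fixes X :: "'a topology"
  assumes "\<not> baire_space X"
  shows "\<exists>U (f :: 'a \<Rightarrow> real).
           openin X U \<and> U \<noteq> {} \<and> fragmentable X f
           \<and> (\<forall>x\<in>U. \<not> continuous_at_point X f x)
           \<and> f ` topspace X \<subseteq> {1 / real n | n. n \<ge> 1}
           \<and> (perfectly_normal X \<longrightarrow> lebesgue_property X f)"
proof -
  obtain U and K :: "nat \<Rightarrow> 'a set" where h: "openin X U" "U \<noteq> {}" "\<forall>n. closedin X (K n)" "\<forall>n. X interior_of K n = {}"
     "\<forall>m n. m \<le> n \<longrightarrow> K m \<subseteq> K n" "K 0 = {}" "U \<subseteq> (\<Union>n. K n)"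
    using reduce[OF assms] by blast
  show ?thesis by (rule main[OF h])
qed

end
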